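(* Suppose that there exist solutions $\hat f$, $\hat{\hat f}$, $\hat\Upsilon$ to Poisson's equation (with forcing functions $f$, $\hat f$ and $\Upsilon$ respectively, as defined in the context) that are continuously differentiable on $\Pi=\mathbb{R}^d\times\Omega$. Let $\{\Theta_t\}$ be any solution of the fixed-gain QSA ODE $\frac{d}{dt}\Theta_t=\alpha f(\Theta_t,\xi_t)$ and write $\hat f_t=\hat f(\Theta_t,\Phi_t)$, $\Upsilon_t=\Upsilon(\Theta_t,\Phi_t)$. Then: (i) The process $Y_t=\Theta_t+\alpha\hat f_t$ (so $\Theta_t=Y_t-\alpha\hat f_t$) satisfies $$\frac{d}{dt}Y_t=\alpha\Big[\bar f(Y_t)-\alpha\big(B_t\hat f_t+\Upsilon_t\big)\Big],\qquad B_t=\int_0^1\bar A(Y_t-r\alpha\hat f_t)\,dr .$$ (ii) Define $\mathcal W^0_t=-[D^f\hat\Upsilon](\Theta_t,\Phi_t)$, $\mathcal W^1_t=-[D^f\hat{\hat f}](\Theta_t,\Phi_t)+\hat\Upsilon(\Theta_t,\Phi_t)$, $\mathcal W^2_t=\hat{\hat f}(\Theta_t,\Phi_t)$, and suppose $t\mapsto\mathcal W^1_t$ is differentiable and $t\mapsto\mathcal W^2_t$ is twice differentiable. Then $$\frac{d}{dt}\Theta_t=\alpha\big[\bar f(\Theta_t)-\alpha\bar\Upsilon(\Theta_t)+\mathcal W_t\big],\qquad \mathcal W_t=\alpha^2\mathcal W^0_t+\alpha\frac{d}{dt}\mathcal W^1_t+\frac{d^2}{dt^2}\mathcal W^2_t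 .$$
   Context: Setting. Fix $d,m,K\ge1$, frequencies $\omega_i>0$, phases $\phi_i$. Clock process: $\frac{d}{dt}\Phi_t=W\Phi_t$, $W=2\pi j\,\mathrm{diag}(\omega_i)$, $\Phi^i_t=\exp(2\pi j[\omega_it+\phi_i])$; $\Omega\subset\mathbb{C}^K$ is the closure of its orbit (compact, flow invariant; any point may be used as $\Phi_0$), and $\pi$ is the uniform (Haar) probability measure on $\Omega$. Probing signal $\xi_t=G(\Phi_t)$ with $G(z)=G_0((z+1/z)/2)$, $G_0\colon\mathbb{R}^K\to\mathbb{R}^m$ analytic with absolutely summable Taylor coefficients. $f\colon\mathbb{R}^d\times\mathbb{R}^m\to\mathbb{R}^d$ and $\bar f(\theta)=\int_\Omega f(\theta,G(z))\pi(dz)$ are continuously differentiable, $\bar A(\theta)=\partial_\theta\bar f(\theta)$, and $\alpha>0$. Poisson's equation: for $g\colon\mathbb{R}^d\times\Omega\to\mathbb{R}^d$ with $\bar g(\theta)=\int g(\theta,z)\pi(dz)$, a solution is $\hat g\colon\mathbb{R}^d\times\Omega\to\mathbb{R}^d$ such that for every $\theta$, every initial $\Phi_0\in\Omega$ and all $0\le t_0\le t_1$: $\hat g(\theta,\Phi_{t_0})=\int_{t_0}^{t_1}[g(\theta,\Phi_t)-\bar g(\theta)]dt+\hat g(\theta,\Phi_{t_1})$, normalized so $\int\hat g(\theta,z)\pi(dz)=0$. Here $\hat f$ solves it with forcing $(\theta,z)\mapsto f(\theta,G(z))$; $\hat A(\theta,z)=\partial_\theta\hat f(\theta,z)$; $\Upsilon(\theta,z)=-\hat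 A(\theta,z)f(\theta,G(z))$ and $\bar\Upsilon(\theta)=\int_\Omega\Upsilon(\theta,z)\pi(dz)$; $\hat{\hat f}$ solves Poisson's equation with forcing $\hat f$; $\hat\Upsilon$ solves it with forcing $\Upsilon$. For $h\colon\mathbb{R}^d\times\Omega\to\mathbb{R}^d$ differentiable in $\theta$, $[D^fh](\theta,z)=\partial_\theta h(\theta,z)\,f(\theta,G(z))$. *)

theory Defs
  imports "HOL-Probability.Probability"
begin

definition clock :: "real^'k \<Rightarrow> real^'k \<Rightarrow> real \<Rightarrow> complex^'k" where
  "clock \<omega> \<phi> t = (\<chi> i. exp (2 * of_real pi * \<i> * of_real (\<omega>$i * t + \<phi>$i)))"

definition clock_flow :: "real^'k \<Rightarrow> complex^'k \<Rightarrow> real \<Rightarrow> complex^'k" where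
  "clock_flow \<omega> z t = (\<chi> i. z$i * exp (2 * of_real pi * \<i> * of_real (\<omega>$i * t)))"

definition clock_Omega :: "real^'k \<Rightarrow> real^'k \<Rightarrow> (complex^'k) set" where
  "clock_Omega \<omega> \<phi> = closure {clock \<omega> \<phi> t | t. t \<ge> 0}"

text \<open>The compact group H (closure of the one-parameter subgroup); Omega is an H-torsor.\<close>
definition clock_group :: "real^'k \<Rightarrow> (complex^'k) set" where
  "clock_group \<omega> = closure (range (\<lambda>t. \<chi> i. exp (2 * of_real pi * \<i> * of_real (\<omega>$i * t))))"

definition is_haar_on_Omega :: "real^'k \<Rightarrow> real^'k \<Rightarrow> (complex^'k) measure \<Rightarrow> bool" where
  "is_haar_on_Omega \<omega> \<phi> \<mu> \<longleftrightarrow>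
     prob_space \<mu> \<and> sets \<mu> = sets borel \<and> emeasure \<mu> (clock_Omega \<omega> \<phi>) = 1 \<and>
     (\<forall>h \<in> clock_group \<omega>. distr \<mu> borel (\<lambda>z. \<chi> i. h$i * z$i) = \<mu>)"

text \<open>G(z) = G0((z + 1/z)/2); on Omega the argument is real, so we take real parts.\<close>
definition probe :: "(real^'k \<Rightarrow> real^'m) \<Rightarrow> complex^'k \<Rightarrow> real^'m" where
  "probe G0 z = G0 (\<chi> i. Re ((z$i + inverse (z$i)) / 2))"

text \<open>G0 is given on the cube [-1,1]^K by its Taylor series with absolutely summable
  coefficients (multi-indices are functions 'k => nat).\<close>
definition abs_summable_taylor :: "(real^'k \<Rightarrow> real^'m) \<Rightarrow> bool" where
  "abs_summable_taylor G0 \<longleftrightarrow>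
     (\<exists>c :: ('k \<Rightarrow> nat) \<Rightarrow> real^'m.
        (\<lambda>a. norm (c a)) summable_on UNIV \<and>
        (\<forall>x. (\<forall>i. \<bar>x$i\<bar> \<le> 1) \<longrightarrow>
             G0 x = (\<Sum>\<^sub>\<infinity>a. (\<Prod>i\<in>UNIV. (x$i) ^ (a i)) *\<^sub>R c a)))"

text \<open>Continuously differentiable on a (possibly non-open) set S: a derivative
  within S exists at every point of S and depends continuously on the point.\<close>
definition C1_on :: "'a::real_normed_vector set \<Rightarrow> ('a \<Rightarrow> 'b::real_normed_vector) \<Rightarrow> bool" where
  "C1_on S g \<longleftrightarrow> (\<exists>g'. (\<forall>x\<in>S. (g has_derivative blinfun_apply (g' x)) (at x within S))
                         \<and> continuous_on S g')"

definition avg :: "(complex^'k) measure \<Rightarrow> ('a \<Rightarrow> complex^'k \<Rightarrow> real^'d) \<Rightarrow> 'a \<Rightarrow> real^'d" where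
  "avg \<mu> g \<theta> = (LINT z|\<mu>. g \<theta> z)"

definition poisson_solution ::
  "real^'k \<Rightarrow> real^'k \<Rightarrow> (complex^'k) measure \<Rightarrow>
   (real^'d \<Rightarrow> complex^'k \<Rightarrow> real^'d) \<Rightarrow> (real^'d \<Rightarrow> complex^'k \<Rightarrow> real^'d) \<Rightarrow> bool" where
  "poisson_solution \<omega> \<phi> \<mu> g gh \<longleftrightarrow>
     (\<forall>\<theta> z t0 t1. z \<in> clock_Omega \<omega> \<phi> \<longrightarrow> 0 \<le> t0 \<longrightarrow> t0 \<le> t1 \<longrightarrow>
        ((\<lambda>t. g \<theta> (clock_flow \<omega> z t) - avg \<mu> g \<theta>) has_integral
           (gh \<theta> (clock_flow \<omega> z t0) - gh \<theta> (clock_flow \<omega> z t1))) {t0..t1}) \<and>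
     (\<forall>\<theta>. (LINT z|\<mu>. gh \<theta> z) = 0)"

definition dtheta :: "(real^'d \<Rightarrow> complex^'k \<Rightarrow> real^'d) \<Rightarrow> real^'d \<Rightarrow> complex^'k \<Rightarrow> real^'d \<Rightarrow> real^'d" where
  "dtheta h \<theta> z = frechet_derivative (\<lambda>\<theta>'. h \<theta>' z) (at \<theta>)"

definition Df :: "(real^'d \<Rightarrow> real^'m \<Rightarrow> real^'d) \<Rightarrow> (real^'k \<Rightarrow> real^'m) \<Rightarrow>
    (real^'d \<Rightarrow> complex^'k \<Rightarrow> real^'d) \<Rightarrow> real^'d \<Rightarrow> complex^'k \<Rightarrow> real^'d" where
  "Df f G0 h \<theta> z = dtheta h \<theta> z (f \<theta> (probe G0 z))"

definition Upsilon :: "(real^'d \<Rightarrow> real^'m \<Rightarrow> real^'d) \<Rightarrow> (real^'k \<Rightarrow> real^'m) \<Rightarrow>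
    (real^'d \<Rightarrow> complex^'k \<Rightarrow> real^'d) \<Rightarrow> real^'d \<Rightarrow> complex^'k \<Rightarrow> real^'d" where
  "Upsilon f G0 fh \<theta> z = - dtheta fh \<theta> z (f \<theta> (probe G0 z))"

definition Abar_mat :: "(real^'d \<Rightarrow> real^'d) \<Rightarrow> real^'d \<Rightarrow> real^'d^'d" where
  "Abar_mat fb \<theta> = matrix (frechet_derivative fb (at \<theta>))"

end

theory Submission
  imports Defs
begin

definition cube :: "(real^'k) set" where "cube = {x. \<forall>i. \<bar>x$i\<bar> \<le> 1}"

lemma G0_cont:
  assumes "abs_summable_taylor (G0 :: real^'k \<Rightarrow> real^'m)"
  shows "continuous_on (cube::(real^'k) set) G0"
proof -
  obtain c :: "('k \<Rightarrow> nat) \<Rightarrow> real^'m" where cs: "(\<lambda>a. norm (c a)) summable_on UNIV"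
    and ce: "\<And>x. (\<forall>i. \<bar>x$i\<bar> \<le> 1) \<Longrightarrow> G0 x = (\<Sum>\<^sub>\<infinity>a. (\<Prod>i\<in>UNIV. (x$i) ^ (a i)) *\<^sub>R c a)"
    using assms unfolding abs_summable_taylor_def by blast
  define m where "m a x = (\<Prod>i\<in>UNIV. (x$i) ^ (a i))" for a :: "'k \<Rightarrow> nat" and x :: "real^'k"
  have mb: "\<bar>m a x\<bar> \<le> 1" if "x \<in> (cube::(real^'k) set)" for a x
    unfolding m_def abs_prod using that
    by (auto simp: cube_def power_abs intro!: prod_le_1 power_le_one)
  have nb: "norm (m a x *\<^sub>R c a) \<le> norm (c a)" if "x \<in> (cube::(real^'k) set)" for a x
    using mb[OF that, of a] by (simp add: mult_left_le_one_le)
  have abs: "(\<lambda>a. norm (m a x *\<^sub>R c a)) summable_on B" if "x \<in> (cube::(real^'k) set)" for x B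
    apply (rule summable_on_subset_banach[of _ UNIV])
    apply (rule summable_on_comparison_test[OF cs])
    using nb[OF that] by auto
  have sm: "(\<lambda>a. m a x *\<^sub>R c a) summable_on B" if "x \<in> (cube::(real^'k) set)" for x B
    by (rule abs_summable_summable) (use abs[OF that] in auto)
  have csB: "(\<lambda>a. norm (c a)) summable_on B" for B
    by (rule summable_on_subset_banach[OF cs]) auto
  show ?thesis
  proof (rule continuous_on_eq)
    show "continuous_on (cube::(real^'k) set) (\<lambda>x. infsum (\<lambda>a. m a x *\<^sub>R c a) UNIV)"
    proof (rule uniform_limit_theorem[where F="finite_subsets_at_top UNIV"
          and f="\<lambda>X x. \<Sum>a\<in>X. m a x *\<^sub>R c a"])
      show "\<forall>\<^sub>F X in finite_subsets_at_top UNIV. continuous_on (cube::(real^'k) set) (\<lambda>x. \<Sum>a\<in>X. m a x *\<^sub>R c a)"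
        unfolding m_def by (intro always_eventually allI) (intro continuous_intros)
      show "finite_subsets_at_top UNIV \<noteq> bot" by simp
      show "uniform_limit (cube::(real^'k) set) (\<lambda>X x. \<Sum>a\<in>X. m a x *\<^sub>R c a)
             (\<lambda>x. infsum (\<lambda>a. m a x *\<^sub>R c a) UNIV) (finite_subsets_at_top UNIV)"
      proof (rule uniform_limitI)
        fix e :: real assume e: "e > 0"
        have "((\<lambda>X. \<Sum>a\<in>X. norm (c a)) \<longlongrightarrow> infsum (\<lambda>a. norm (c a)) UNIV) (finite_subsets_at_top UNIV)"
          using cs has_sum_def has_sum_infsum by blast
        then have ev: "\<forall>\<^sub>F X in finite_subsets_at_top UNIV. dist (\<Sum>a\<in>X. norm (c a)) (infsum (\<lambda>a. norm (c a)) UNIV) < e"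
          using e tendsto_iff by blast
        have ev2: "\<forall>\<^sub>F X in finite_subsets_at_top UNIV. finite X"
          by (simp add: eventually_finite_subsets_at_top_weakI)
        show "\<forall>\<^sub>F X in finite_subsets_at_top UNIV. \<forall>x\<in>(cube::(real^'k) set). dist (\<Sum>a\<in>X. m a x *\<^sub>R c a) (infsum (\<lambda>a. m a x *\<^sub>R c a) UNIV) < e"
          using ev ev2
        proof eventually_elim
          case (elim X)
          show ?case
          proof
            fix x assume x: "x \<in> (cube::(real^'k) set)"
            have "infsum (\<lambda>a. m a x *\<^sub>R c a) (UNIV - X) = infsum (\<lambda>a. m a x *\<^sub>R c a) UNIV - (\<Sum>a\<in>X. m a x *\<^sub>R c a)"
              using infsum_Diff[OF sm[OF x] sm[OF x], of X UNIV] elim by simp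
            then have "dist (\<Sum>a\<in>X. m a x *\<^sub>R c a) (infsum (\<lambda>a. m a x *\<^sub>R c a) UNIV)
                = norm (infsum (\<lambda>a. m a x *\<^sub>R c a) (UNIV - X))"
              by (simp add: dist_norm norm_minus_commute)
            also have "\<dots> \<le> infsum (\<lambda>a. norm (m a x *\<^sub>R c a)) (UNIV - X)"
              by (rule norm_infsum_bound) (use abs[OF x] in auto)
            also have "\<dots> \<le> infsum (\<lambda>a. norm (c a)) (UNIV - X)"
              by (rule infsum_mono[OF abs[OF x] csB]) (use nb[OF x] in auto)
            also have "\<dots> = infsum (\<lambda>a. norm (c a)) UNIV - (\<Sum>a\<in>X. norm (c a))"
              using infsum_Diff[OF csB csB, of X UNIV] elim by simp
            also have "\<dots> < e" using elim(1) by (simp add: dist_real_def)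
            finally show "dist (\<Sum>a\<in>X. m a x *\<^sub>R c a) (infsum (\<lambda>a. m a x *\<^sub>R c a) UNIV) < e" .
          qed
        qed
      qed
    qed
    show "\<And>x. x \<in> (cube::(real^'k) set) \<Longrightarrow> infsum (\<lambda>a. m a x *\<^sub>R c a) UNIV = G0 x"
      using ce unfolding m_def cube_def by auto
  qed
qed

lemma vec_lambda_vd:
  fixes f :: "real \<Rightarrow> 'i::finite \<Rightarrow> 'a::euclidean_space"
  assumes "\<And>i. ((\<lambda>x. f x i) has_vector_derivative f' i) (at a within S)"
  shows "((\<lambda>x. \<chi> i. f x i) has_vector_derivative (\<chi> i. f' i)) (at a within S)"
  unfolding has_vector_derivative_def
proof (rule has_derivative_componentwise_within[THEN iffD2], intro ballI)
  fix b :: "'a^'i" assume "b \<in> Basis"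
  then obtain i u where b: "b = axis i u" "u \<in> Basis" unfolding Basis_vec_def by auto
  have "((\<lambda>x. f x i \<bullet> u) has_derivative (\<lambda>h. (h *\<^sub>R f' i) \<bullet> u)) (at a within S)"
    using assms[of i] unfolding has_vector_derivative_def
    by (rule has_derivative_inner_left) 
  then show "((\<lambda>x. (\<chi> i. f x i) \<bullet> b) has_derivative (\<lambda>x. (x *\<^sub>R (\<chi> i. f' i)) \<bullet> b)) (at a within S)"
    unfolding b by (simp add: inner_axis)
qed

lemma clock_in_Omega: "t \<ge> 0 \<Longrightarrow> clock \<omega> \<phi> t \<in> clock_Omega \<omega> \<phi>"
  unfolding clock_Omega_def by (rule closure_subset[THEN subsetD]) auto

lemma clock_flow_clock0: "clock_flow \<omega> (clock \<omega> \<phi> 0) t = clock \<omega> \<phi> t"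
  unfolding clock_flow_def clock_def
  by (simp add: exp_add[symmetric] algebra_simps)

definition clockd :: "real^'k \<Rightarrow> real^'k \<Rightarrow> real \<Rightarrow> complex^'k" where
  "clockd \<omega> \<phi> t = (\<chi> i. (2 * of_real pi * \<i> * of_real (\<omega>$i)) * exp (2 * of_real pi * \<i> * of_real (\<omega>$i * t + \<phi>$i)))"

lemma clock_deriv: "(clock \<omega> \<phi> has_vector_derivative clockd \<omega> \<phi> t) (at t within S)"
  unfolding clock_def clockd_def
proof (rule vec_lambda_vd)
  fix i
  have "((\<lambda>z. exp (2 * of_real pi * \<i> * (of_real (\<omega>$i) * z + of_real (\<phi>$i)))) has_field_derivative
        (2 * of_real pi * \<i> * of_real (\<omega>$i)) * exp (2 * of_real pi * \<i> * (of_real (\<omega>$i) * of_real t + of_real (\<phi>$i))))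
        (at (of_real t))"
    by (rule derivative_eq_intros refl | simp)+
  from has_vector_derivative_real_field[OF this]
  show "((\<lambda>x. exp (2 * complex_of_real pi * \<i> * complex_of_real (\<omega> $ i * x + \<phi> $ i))) has_vector_derivative
         2 * complex_of_real pi * \<i> * complex_of_real (\<omega> $ i) * exp (2 * complex_of_real pi * \<i> * complex_of_real (\<omega> $ i * t + \<phi> $ i)))
         (at t within S)" by simp
qed

lemma clock_cont: "continuous_on X (clock \<omega> \<phi>)"
  unfolding clock_def by (intro continuous_intros)

lemma probe_clock_cont:
  fixes G0 :: "real^'k \<Rightarrow> real^'m" and \<omega> \<phi> :: "real^'k"
  assumes "abs_summable_taylor G0"
  shows "continuous_on X (\<lambda>s. probe G0 (clock \<omega> \<phi> s))"
proof -
  have nz: "clock \<omega> \<phi> s $ i \<noteq> 0" for s i unfolding clock_def by simp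
  have inner: "continuous_on X (\<lambda>s. (\<chi> i. Re ((clock \<omega> \<phi> s $ i + inverse (clock \<omega> \<phi> s $ i)) / 2)) :: real^'k)"
    by (intro continuous_intros clock_cont) (auto simp: nz)
  have "(\<chi> i. Re ((clock \<omega> \<phi> s $ i + inverse (clock \<omega> \<phi> s $ i)) / 2)) \<in> (cube :: (real^'k) set)" for s
  proof -
    have "\<bar>Re ((clock \<omega> \<phi> s $ i + inverse (clock \<omega> \<phi> s $ i)) / 2)\<bar> \<le> 1" for i
    proof -
      have n: "norm (clock \<omega> \<phi> s $ i) = 1" unfolding clock_def by (simp add: norm_exp_eq_Re)
      have "\<bar>Re ((clock \<omega> \<phi> s $ i + inverse (clock \<omega> \<phi> s $ i)) / 2)\<bar> \<le> norm ((clock \<omega> \<phi> s $ i + inverse (clock \<omega> \<phi> s $ i)) / 2)"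
        by (rule abs_Re_le_cmod)
      also have "\<dots> \<le> (norm (clock \<omega> \<phi> s $ i) + norm (inverse (clock \<omega> \<phi> s $ i))) / 2"
        by (simp add: norm_divide norm_triangle_ineq divide_right_mono)
      also have "\<dots> = 1" using n by (simp add: norm_inverse)
      finally show ?thesis .
    qed
    then show ?thesis unfolding cube_def by simp
  qed
  then show ?thesis unfolding probe_def
    by (intro continuous_on_compose2[OF G0_cont[OF assms] inner]) auto
qed

lemma nonbot_Ici: "(t::real) \<ge> 0 \<Longrightarrow> at t within {0..} \<noteq> bot"
proof
  assume "t \<ge> 0" "at t within {0..} = bot"
  moreover have "at t within {t..t+1} \<le> at t within {0..}" using \<open>t \<ge> 0\<close> by (intro at_le) auto
  ultimately have "at t within {t..t+1} = bot" by (simp add: bot_unique)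
  then show False by (simp add: at_within_Icc_at_right)
qed

lemma C1_dtheta:
  fixes h :: "real^'d \<Rightarrow> complex^'k \<Rightarrow> real^'d"
  assumes hd: "\<forall>x\<in>UNIV \<times> Om. ((\<lambda>p. h (fst p) (snd p)) has_derivative blinfun_apply (h' x)) (at x within UNIV \<times> Om)"
    and z: "z \<in> Om"
  shows "((\<lambda>\<theta>. h \<theta> z) has_derivative (\<lambda>v. h' (\<theta>,z) (v,0))) (at \<theta>)"
    and "dtheta h \<theta> z = (\<lambda>v. h' (\<theta>,z) (v,0))"
proof -
  have p: "((\<lambda>\<theta>. (\<theta>, z)) has_derivative (\<lambda>v. (v, 0))) (at \<theta> within UNIV)"
    by (rule has_derivative_Pair[OF has_derivative_ident has_derivative_const, simplified])
  have "((\<lambda>x. (\<lambda>p. h (fst p) (snd p)) (x, z)) has_derivative (\<lambda>y. h' (\<theta>, z) (y, 0))) (at \<theta> within UNIV)"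
    apply (rule has_derivative_in_compose2[where t="UNIV \<times> Om" and g="\<lambda>p. h (fst p) (snd p)" and g'="\<lambda>x. blinfun_apply (h' x)", OF _ _ _ p])
    subgoal using hd by blast
    subgoal using z by auto
    subgoal by simp
    done
  then show 1: "((\<lambda>\<theta>. h \<theta> z) has_derivative (\<lambda>v. h' (\<theta>,z) (v,0))) (at \<theta>)" by simp
  show "dtheta h \<theta> z = (\<lambda>v. h' (\<theta>,z) (v,0))"
    unfolding dtheta_def using frechet_derivative_at[OF 1] by simp
qed

lemma C1_path:
  fixes h :: "real^'d \<Rightarrow> complex^'k \<Rightarrow> real^'d" and \<Theta> :: "real \<Rightarrow> real^'d"
  assumes hd: "\<forall>x\<in>UNIV \<times> clock_Omega \<omega> \<phi>. ((\<lambda>p. h (fst p) (snd p)) has_derivative blinfun_apply (h' x)) (at x within UNIV \<times> clock_Omega \<omega> \<phi>)"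
    and Th: "(\<Theta> has_vector_derivative Th') (at t within {0..})" and t: "t \<ge> 0"
  shows "((\<lambda>s. h (\<Theta> s) (clock \<omega> \<phi> s)) has_vector_derivative h' (\<Theta> t, clock \<omega> \<phi> t) (Th', clockd \<omega> \<phi> t)) (at t within {0..})"
proof -
  have p: "((\<lambda>s. (\<Theta> s, clock \<omega> \<phi> s)) has_derivative (\<lambda>y. (y *\<^sub>R Th', y *\<^sub>R clockd \<omega> \<phi> t))) (at t within {0..})"
    using has_derivative_Pair[OF Th[unfolded has_vector_derivative_def] clock_deriv[unfolded has_vector_derivative_def]] .
  have "((\<lambda>s. (\<lambda>p. h (fst p) (snd p)) (\<Theta> s, clock \<omega> \<phi> s)) has_derivative
      (\<lambda>y. h' (\<Theta> t, clock \<omega> \<phi> t) (y *\<^sub>R Th', y *\<^sub>R clockd \<omega> \<phi> t))) (at t within {0..})"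
    apply (rule has_derivative_in_compose2[where t="UNIV \<times> clock_Omega \<omega> \<phi>" and g="\<lambda>p. h (fst p) (snd p)" and g'="\<lambda>x. blinfun_apply (h' x)", OF _ _ _ p])
    subgoal using hd by blast
    subgoal using t clock_in_Omega by auto
    subgoal using t by simp
    done
  moreover have "h' (\<Theta> t, clock \<omega> \<phi> t) (y *\<^sub>R Th', y *\<^sub>R clockd \<omega> \<phi> t) = y *\<^sub>R h' (\<Theta> t, clock \<omega> \<phi> t) (Th', clockd \<omega> \<phi> t)" for y
  proof -
    have "(y *\<^sub>R Th', y *\<^sub>R clockd \<omega> \<phi> t) = y *\<^sub>R (Th', clockd \<omega> \<phi> t)" by simp
    then show ?thesis by (simp only: blinfun.scaleR_right)
  qed
  ultimately show ?thesis unfolding has_vector_derivative_def by (simp only: fst_conv snd_conv)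
qed

lemma poisson_deriv:
  fixes g gh :: "real^'d \<Rightarrow> complex^'k \<Rightarrow> real^'d"
  assumes ps: "poisson_solution \<omega> \<phi> \<mu> g gh"
    and cont: "continuous_on {0..} (\<lambda>s. g \<theta> (clock \<omega> \<phi> s))" and t: "t \<ge> 0"
  shows "((\<lambda>s. gh \<theta> (clock \<omega> \<phi> s)) has_vector_derivative - (g \<theta> (clock \<omega> \<phi> t) - avg \<mu> g \<theta>)) (at t within {0..})"
proof -
  define F where "F r = g \<theta> (clock \<omega> \<phi> r) - avg \<mu> g \<theta>" for r
  have eq: "gh \<theta> (clock \<omega> \<phi> s) = gh \<theta> (clock \<omega> \<phi> 0) - integral {0..s} F" if "s \<in> {0..}" for s
  proof -
    have "((\<lambda>r. g \<theta> (clock_flow \<omega> (clock \<omega> \<phi> 0) r) - avg \<mu> g \<theta>) has_integral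
        (gh \<theta> (clock_flow \<omega> (clock \<omega> \<phi> 0) 0) - gh \<theta> (clock_flow \<omega> (clock \<omega> \<phi> 0) s))) {0..s}"
    proof -
      have "\<forall>\<theta> z t0 t1. z \<in> clock_Omega \<omega> \<phi> \<longrightarrow> 0 \<le> t0 \<longrightarrow> t0 \<le> t1 \<longrightarrow>
        ((\<lambda>t. g \<theta> (clock_flow \<omega> z t) - avg \<mu> g \<theta>) has_integral
           (gh \<theta> (clock_flow \<omega> z t0) - gh \<theta> (clock_flow \<omega> z t1))) {t0..t1}"
        using ps unfolding poisson_solution_def by (rule conjunct1)
      from this[rule_format, OF clock_in_Omega[of 0 \<omega> \<phi>] order_refl] that
      show ?thesis by simp
    qed
    then have "(F has_integral (gh \<theta> (clock \<omega> \<phi> 0) - gh \<theta> (clock \<omega> \<phi> s))) {0..s}"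
      unfolding F_def clock_flow_clock0 .
    then show ?thesis by (simp add: integral_unique)
  qed
  have cF: "continuous_on {0..t+1} F" unfolding F_def
    by (rule continuous_on_diff[OF continuous_on_subset[OF cont] continuous_on_const]) auto
  have "((\<lambda>s. gh \<theta> (clock \<omega> \<phi> 0) - integral {0..s} F) has_vector_derivative - F t) (at t within {0..t+1})"
    using has_vector_derivative_diff[OF has_vector_derivative_const integral_has_vector_derivative[OF cF], of t "gh \<theta> (clock \<omega> \<phi> 0)"] t
    by simp
  moreover have "at t within {0..t+1} = at t within {0..}"
    by (rule at_within_nhd[of _ "{..<t+1}"]) auto
  ultimately have D: "((\<lambda>s. gh \<theta> (clock \<omega> \<phi> 0) - integral {0..s} F) has_vector_derivative - F t) (at t within {0..})"
    by metis
  have "((\<lambda>s. gh \<theta> (clock \<omega> \<phi> s)) has_vector_derivative - F t) (at t within {0..})"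
  proof (rule has_vector_derivative_transform[OF _ _ D])
    show "t \<in> {0..}" using t by simp
    show "\<And>x. x \<in> {0..} \<Longrightarrow> gh \<theta> (clock \<omega> \<phi> x) = gh \<theta> (clock \<omega> \<phi> 0) - integral {0..x} F" by (rule eq)
  qed
  then show ?thesis by (simp only: F_def)
qed

lemma total_deriv:
  fixes g gh :: "real^'d \<Rightarrow> complex^'k \<Rightarrow> real^'d" and \<Theta> :: "real \<Rightarrow> real^'d"
  assumes C1: "C1_on (UNIV \<times> clock_Omega \<omega> \<phi>) (\<lambda>p. gh (fst p) (snd p))"
    and ps: "poisson_solution \<omega> \<phi> \<mu> g gh"
    and cont: "\<And>\<theta>. continuous_on {0..} (\<lambda>s. g \<theta> (clock \<omega> \<phi> s))"
    and Th: "(\<Theta> has_vector_derivative Th') (at t within {0..})" and t: "t \<ge> 0"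
  shows "((\<lambda>s. gh (\<Theta> s) (clock \<omega> \<phi> s)) has_vector_derivative
           dtheta gh (\<Theta> t) (clock \<omega> \<phi> t) Th' - (g (\<Theta> t) (clock \<omega> \<phi> t) - avg \<mu> g (\<Theta> t))) (at t within {0..})"
proof -
  obtain h' where hd: "\<forall>x\<in>UNIV \<times> clock_Omega \<omega> \<phi>. ((\<lambda>p. gh (fst p) (snd p)) has_derivative blinfun_apply (h' x)) (at x within UNIV \<times> clock_Omega \<omega> \<phi>)"
    using C1 unfolding C1_on_def by blast
  have z: "clock \<omega> \<phi> t \<in> clock_Omega \<omega> \<phi>" using clock_in_Omega t .
  have A: "((\<lambda>s. gh (\<Theta> s) (clock \<omega> \<phi> s)) has_vector_derivative h' (\<Theta> t, clock \<omega> \<phi> t) (Th', clockd \<omega> \<phi> t)) (at t within {0..})"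
    by (rule C1_path[OF hd Th t])
  have B: "((\<lambda>s. gh (\<Theta> t) (clock \<omega> \<phi> s)) has_vector_derivative h' (\<Theta> t, clock \<omega> \<phi> t) (0, clockd \<omega> \<phi> t)) (at t within {0..})"
    using C1_path[OF hd has_vector_derivative_const[of "\<Theta> t"] t] .
  have P: "((\<lambda>s. gh (\<Theta> t) (clock \<omega> \<phi> s)) has_vector_derivative - (g (\<Theta> t) (clock \<omega> \<phi> t) - avg \<mu> g (\<Theta> t))) (at t within {0..})"
    by (rule poisson_deriv[OF ps cont t])
  have e: "h' (\<Theta> t, clock \<omega> \<phi> t) (0, clockd \<omega> \<phi> t) = - (g (\<Theta> t) (clock \<omega> \<phi> t) - avg \<mu> g (\<Theta> t))"
    using vector_derivative_unique_within[OF nonbot_Ici[OF t] B P] .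
  have dt: "dtheta gh (\<Theta> t) (clock \<omega> \<phi> t) = (\<lambda>v. h' (\<Theta> t, clock \<omega> \<phi> t) (v,0))"
    using C1_dtheta(2)[OF hd z] .
  have "h' (\<Theta> t, clock \<omega> \<phi> t) (Th', clockd \<omega> \<phi> t) = h' (\<Theta> t, clock \<omega> \<phi> t) (Th', 0) + h' (\<Theta> t, clock \<omega> \<phi> t) (0, clockd \<omega> \<phi> t)"
    by (simp add: blinfun.add_right[symmetric])
  also have "\<dots> = dtheta gh (\<Theta> t) (clock \<omega> \<phi> t) Th' - (g (\<Theta> t) (clock \<omega> \<phi> t) - avg \<mu> g (\<Theta> t))"
    unfolding e dt by simp
  finally show ?thesis using A by (simp only:)
qed

lemma dtheta_scale:
  fixes gh :: "real^'d \<Rightarrow> complex^'k \<Rightarrow> real^'d"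
  assumes C1: "C1_on (UNIV \<times> clock_Omega \<omega> \<phi>) (\<lambda>p. gh (fst p) (snd p))"
    and z: "z \<in> clock_Omega \<omega> \<phi>"
  shows "dtheta gh \<theta> z (c *\<^sub>R v) = c *\<^sub>R dtheta gh \<theta> z v"
proof -
  obtain h' where hd: "\<forall>x\<in>UNIV \<times> clock_Omega \<omega> \<phi>. ((\<lambda>p. gh (fst p) (snd p)) has_derivative blinfun_apply (h' x)) (at x within UNIV \<times> clock_Omega \<omega> \<phi>)"
    using C1 unfolding C1_on_def by blast
  have "(c *\<^sub>R v, 0::complex^'k) = c *\<^sub>R (v, 0)" by simp
  then show ?thesis unfolding C1_dtheta(2)[OF hd z] by (simp only: blinfun.scaleR_right)
qed

lemma bl_mv: "bounded_linear (\<lambda>A::real^'n^'m. A *v w)"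
proof -
  have "linear (\<lambda>A::real^'n^'m. A *v w)"
    by (rule linearI) (simp_all add: matrix_vector_mult_add_rdistrib scaleR_matrix_vector_assoc)
  then show ?thesis by (simp add: linear_conv_bounded_linear)
qed

lemma fbar_taylor:
  fixes fb :: "real^'d \<Rightarrow> real^'d"
  assumes C1: "C1_on UNIV fb"
  shows "fb (y - w) = fb y - integral {0..1} (\<lambda>r. Abar_mat fb (y - r *\<^sub>R w)) *v w"
proof -
  obtain fb' where d: "\<forall>x\<in>UNIV. (fb has_derivative blinfun_apply (fb' x)) (at x within UNIV)"
    and c: "continuous_on UNIV fb'"
    using C1 unfolding C1_on_def by blast
  have d': "(fb has_derivative blinfun_apply (fb' x)) (at x)" for x using d by simp
  define M where "M r = matrix (blinfun_apply (fb' (y - r *\<^sub>R w)))" for r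
  have Am: "Abar_mat fb (y - r *\<^sub>R w) = M r" for r
    unfolding Abar_mat_def M_def using frechet_derivative_at[OF d'] by simp
  have Mv: "M r *v w = fb' (y - r *\<^sub>R w) w" for r
    unfolding M_def by (rule matrix_works) (simp add: linear_matrix_vector_mul_eq blinfun.bounded_linear_right bounded_linear.linear)
  have cF: "continuous_on {0..1} (\<lambda>r. fb' (y - r *\<^sub>R w))"
    by (rule continuous_on_compose2[OF c]) (auto intro!: continuous_intros)
  have cM: "continuous_on {0..1} M"
  proof -
    have "M = (\<lambda>r. \<chi> i j. fb' (y - r *\<^sub>R w) (axis j 1) $ i)"
      unfolding M_def matrix_def by simp
    moreover have "continuous_on {0..1} (\<lambda>r. \<chi> i j. fb' (y - r *\<^sub>R w) (axis j 1) $ i)"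
      by (intro continuous_on_vec_lambda continuous_on_component blinfun.continuous_on[OF cF continuous_on_const])
    ultimately show ?thesis by simp
  qed
  have intM: "M integrable_on {0..1}" by (rule integrable_continuous_interval[OF cM])
  have ilin: "integral {0..1} M *v w = integral {0..1} (\<lambda>r. M r *v w)"
    using integral_linear[OF intM bl_mv[of w]] by (simp add: o_def)
  have der: "((\<lambda>r. fb (y - r *\<^sub>R w)) has_vector_derivative - (fb' (y - r *\<^sub>R w) w)) (at r within {0..1})" for r
  proof -
    have i: "((\<lambda>r. y - r *\<^sub>R w) has_derivative (\<lambda>h. - (h *\<^sub>R w))) (at r within {0..1})"
      by (rule derivative_eq_intros refl | simp)+
    have "((\<lambda>r. fb (y - r *\<^sub>R w)) has_derivative (\<lambda>h. fb' (y - r *\<^sub>R w) (- (h *\<^sub>R w)))) (at r within {0..1})"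
      by (rule has_derivative_compose[OF i d'])
    moreover have "fb' (y - r *\<^sub>R w) (- (h *\<^sub>R w)) = h *\<^sub>R (- (fb' (y - r *\<^sub>R w) w))" for h
      by (simp add: blinfun.minus_right blinfun.scaleR_right)
    ultimately show ?thesis unfolding has_vector_derivative_def by simp
  qed
  have "((\<lambda>r. - (fb' (y - r *\<^sub>R w) w)) has_integral (fb (y - 1 *\<^sub>R w) - fb (y - 0 *\<^sub>R w))) {0..1}"
    by (rule fundamental_theorem_of_calculus) (auto intro: der)
  then have "((\<lambda>r. - (fb' (y - r *\<^sub>R w) w)) has_integral (fb (y - w) - fb y)) {0..1}"
    by simp
  from integral_unique[OF this]
  have "integral {0..1} (\<lambda>r. - (fb' (y - r *\<^sub>R w) w)) = fb (y - w) - fb y" .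
  then have "integral {0..1} (\<lambda>r. M r *v w) = fb y - fb (y - w)"
    unfolding Mv by (simp add: algebra_simps)
  then show ?thesis unfolding Am ilin by simp
qed

lemma vd_cmul: "(f has_vector_derivative f') net \<Longrightarrow> ((\<lambda>x. c *\<^sub>R f x) has_vector_derivative c *\<^sub>R f') net"
  unfolding has_vector_derivative_def
  by (drule has_derivative_scaleR_right[where r=c]) (simp add: mult.commute)

lemma C1_cont: "C1_on S g \<Longrightarrow> continuous_on S g"
  unfolding C1_on_def continuous_on_eq_continuous_within
  by (metis has_derivative_continuous)

lemma alg1:
  fixes P F FY FT U :: "'a::real_vector"
  assumes "\<alpha> *\<^sub>R P = FY - FT"
  shows "\<alpha> *\<^sub>R F + \<alpha> *\<^sub>R (- (\<alpha> *\<^sub>R U) - (F - FT)) = \<alpha> *\<^sub>R (FY - \<alpha> *\<^sub>R (P + U))"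
proof -
  have e: "FT = FY - \<alpha> *\<^sub>R P" using assms by (simp add: algebra_simps)
  show ?thesis unfolding e by (simp add: algebra_simps)
qed

lemma alg2:
  fixes W1 W2 DU U Ub F Fb :: "'a::real_vector"
  assumes "W2 + \<alpha> *\<^sub>R W1 = \<alpha> *\<^sub>R (\<alpha> *\<^sub>R DU - (U - Ub)) - (- (\<alpha> *\<^sub>R U) - (F - Fb))"
  shows "\<alpha> *\<^sub>R (Fb - \<alpha> *\<^sub>R Ub + (\<alpha>\<^sup>2 *\<^sub>R (- DU) + \<alpha> *\<^sub>R W1 + W2)) = \<alpha> *\<^sub>R F"
proof -
  have "W2 = \<alpha> *\<^sub>R (\<alpha> *\<^sub>R DU - (U - Ub)) - (- (\<alpha> *\<^sub>R U) - (F - Fb)) - \<alpha> *\<^sub>R W1"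
    using assms by (simp add: algebra_simps)
  then show ?thesis by (simp add: algebra_simps power2_eq_square)
qed

theorem theorem2p3:
  fixes \<omega> \<phi> :: "real^'k"
    and G0 :: "real^'k \<Rightarrow> real^'m"
    and f :: "real^'d \<Rightarrow> real^'m \<Rightarrow> real^'d"
    and \<mu> :: "(complex^'k) measure"
    and \<alpha> :: real
    and fh fhh Uph :: "real^'d \<Rightarrow> complex^'k \<Rightarrow> real^'d"
    and \<Theta> :: "real \<Rightarrow> real^'d"
  assumes \<omega>_pos: "\<forall>i. \<omega>$i > 0"
    and haar: "is_haar_on_Omega \<omega> \<phi> \<mu>"
    and G0: "abs_summable_taylor G0"
    and f_C1: "C1_on UNIV (\<lambda>p. f (fst p) (snd p))"
    and fbar_C1: "C1_on UNIV (avg \<mu> (\<lambda>\<theta> z. f \<theta> (probe G0 z)))"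
    and \<alpha>_pos: "\<alpha> > 0"
    and fh_sol: "poisson_solution \<omega> \<phi> \<mu> (\<lambda>\<theta> z. f \<theta> (probe G0 z)) fh"
    and fhh_sol: "poisson_solution \<omega> \<phi> \<mu> fh fhh"
    and Uph_sol: "poisson_solution \<omega> \<phi> \<mu> (Upsilon f G0 fh) Uph"
    and fh_C1: "C1_on (UNIV \<times> clock_Omega \<omega> \<phi>) (\<lambda>p. fh (fst p) (snd p))"
    and fhh_C1: "C1_on (UNIV \<times> clock_Omega \<omega> \<phi>) (\<lambda>p. fhh (fst p) (snd p))"
    and Uph_C1: "C1_on (UNIV \<times> clock_Omega \<omega> \<phi>) (\<lambda>p. Uph (fst p) (snd p))"
    and QSA: "\<forall>t\<ge>0. (\<Theta> has_vector_derivative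
                 \<alpha> *\<^sub>R f (\<Theta> t) (probe G0 (clock \<omega> \<phi> t))) (at t within {0..})"
  shows
   "(let fbar = avg \<mu> (\<lambda>\<theta> z. f \<theta> (probe G0 z));
         fht = (\<lambda>t. fh (\<Theta> t) (clock \<omega> \<phi> t));
         Ups = (\<lambda>t. Upsilon f G0 fh (\<Theta> t) (clock \<omega> \<phi> t));
         Y = (\<lambda>t. \<Theta> t + \<alpha> *\<^sub>R fht t);
         B = (\<lambda>t. integral {0..1} (\<lambda>r. Abar_mat fbar (Y t - (r * \<alpha>) *\<^sub>R fht t)))
     in \<forall>t\<ge>0. (Y has_vector_derivative
                 \<alpha> *\<^sub>R (fbar (Y t) - \<alpha> *\<^sub>R (B t *v fht t + Ups t))) (at t within {0..}))
    \<and>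
    (let fbar = avg \<mu> (\<lambda>\<theta> z. f \<theta> (probe G0 z));
         Upsbar = avg \<mu> (Upsilon f G0 fh);
         W0 = (\<lambda>t. - Df f G0 Uph (\<Theta> t) (clock \<omega> \<phi> t));
         W1 = (\<lambda>t. - Df f G0 fhh (\<Theta> t) (clock \<omega> \<phi> t) + Uph (\<Theta> t) (clock \<omega> \<phi> t));
         W2 = (\<lambda>t. fhh (\<Theta> t) (clock \<omega> \<phi> t))
     in \<forall>W1' W2' W2''.
          (\<forall>t\<ge>0. (W1 has_vector_derivative W1' t) (at t within {0..}) \<and>
                  (W2 has_vector_derivative W2' t) (at t within {0..}) \<and>
                  (W2' has_vector_derivative W2'' t) (at t within {0..})) \<longrightarrow>
          (\<forall>t\<ge>0. (\<Theta> has_vector_derivative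
              \<alpha> *\<^sub>R (fbar (\<Theta> t) - \<alpha> *\<^sub>R Upsbar (\<Theta> t)
                      + (\<alpha>\<^sup>2 *\<^sub>R W0 t + \<alpha> *\<^sub>R W1' t + W2'' t))) (at t within {0..})))"
proof -
  have QSA': "\<And>t. t \<ge> 0 \<Longrightarrow> (\<Theta> has_vector_derivative \<alpha> *\<^sub>R f (\<Theta> t) (probe G0 (clock \<omega> \<phi> t))) (at t within {0..})"
    using QSA by blast
  have fcont: "continuous_on UNIV (\<lambda>p. f (fst p) (snd p))" by (rule C1_cont[OF f_C1])
  have fhcont: "continuous_on (UNIV \<times> clock_Omega \<omega> \<phi>) (\<lambda>p. fh (fst p) (snd p))" by (rule C1_cont[OF fh_C1])
  have path_in: "(\<lambda>s. (\<theta>, clock \<omega> \<phi> s)) ` {0..} \<subseteq> UNIV \<times> clock_Omega \<omega> \<phi>" for \<theta> :: "real^'d"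
    using clock_in_Omega by auto
  have path_cont: "continuous_on {0..} (\<lambda>s. (\<theta>, clock \<omega> \<phi> s))" for \<theta> :: "real^'d"
    by (intro continuous_on_Pair continuous_on_const clock_cont)
  have xicont: "continuous_on {0..} (\<lambda>s. probe G0 (clock \<omega> \<phi> s))"
    by (rule probe_clock_cont[OF G0])
  have cf: "continuous_on {0..} (\<lambda>s. f \<theta> (probe G0 (clock \<omega> \<phi> s)))" for \<theta>
  proof -
    have "continuous_on {0..} (\<lambda>s. (\<lambda>p. f (fst p) (snd p)) (\<theta>, probe G0 (clock \<omega> \<phi> s)))"
      by (rule continuous_on_compose2[OF fcont]) (auto intro!: continuous_on_Pair continuous_on_const xicont)
    then show ?thesis by simp
  qed
  have cfh: "continuous_on {0..} (\<lambda>s. fh \<theta> (clock \<omega> \<phi> s))" for \<theta>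
  proof -
    have "continuous_on {0..} (\<lambda>s. (\<lambda>p. fh (fst p) (snd p)) (\<theta>, clock \<omega> \<phi> s))"
      by (rule continuous_on_compose2[OF fhcont path_cont path_in])
    then show ?thesis by simp
  qed
  obtain fh' where fhd: "\<forall>x\<in>UNIV \<times> clock_Omega \<omega> \<phi>. ((\<lambda>p. fh (fst p) (snd p)) has_derivative blinfun_apply (fh' x)) (at x within UNIV \<times> clock_Omega \<omega> \<phi>)"
    and fh'c: "continuous_on (UNIV \<times> clock_Omega \<omega> \<phi>) fh'"
    using fh_C1 unfolding C1_on_def by blast
  have cU: "continuous_on {0..} (\<lambda>s. Upsilon f G0 fh \<theta> (clock \<omega> \<phi> s))" for \<theta>
  proof -
    have c1: "continuous_on {0..} (\<lambda>s. fh' (\<theta>, clock \<omega> \<phi> s))"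
      by (rule continuous_on_compose2[OF fh'c path_cont path_in])
    have c2: "continuous_on {0..} (\<lambda>s. (f \<theta> (probe G0 (clock \<omega> \<phi> s)), 0::complex^'k))"
      by (intro continuous_on_Pair cf continuous_on_const)
    have A: "continuous_on {0..} (\<lambda>s. - fh' (\<theta>, clock \<omega> \<phi> s) (f \<theta> (probe G0 (clock \<omega> \<phi> s)), 0))"
      by (intro continuous_on_minus blinfun.continuous_on[OF c1 c2])
    have Beq: "- fh' (\<theta>, clock \<omega> \<phi> s) (f \<theta> (probe G0 (clock \<omega> \<phi> s)), 0) = Upsilon f G0 fh \<theta> (clock \<omega> \<phi> s)"
      if "s \<in> {0..}" for s
      using that C1_dtheta(2)[OF fhd clock_in_Omega[of s]] unfolding Upsilon_def by simp
    show ?thesis by (rule continuous_on_eq[OF A Beq])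
  qed
  have Dfh: "((\<lambda>s. fh (\<Theta> s) (clock \<omega> \<phi> s)) has_vector_derivative
      - (\<alpha> *\<^sub>R Upsilon f G0 fh (\<Theta> t) (clock \<omega> \<phi> t)) - (f (\<Theta> t) (probe G0 (clock \<omega> \<phi> t)) - avg \<mu> (\<lambda>\<theta> z. f \<theta> (probe G0 z)) (\<Theta> t)))
      (at t within {0..})" if t: "t \<ge> 0" for t
  proof -
    have "dtheta fh (\<Theta> t) (clock \<omega> \<phi> t) (\<alpha> *\<^sub>R f (\<Theta> t) (probe G0 (clock \<omega> \<phi> t))) = - (\<alpha> *\<^sub>R Upsilon f G0 fh (\<Theta> t) (clock \<omega> \<phi> t))"
      unfolding dtheta_scale[OF fh_C1 clock_in_Omega[OF t]] Upsilon_def by simp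
    with total_deriv[OF fh_C1 fh_sol cf QSA'[OF t] t] show ?thesis by simp
  qed
  define fbar where "fbar = avg \<mu> (\<lambda>\<theta> z. f \<theta> (probe G0 z))"
  define fht where "fht = (\<lambda>t. fh (\<Theta> t) (clock \<omega> \<phi> t))"
  define Ups where "Ups = (\<lambda>t. Upsilon f G0 fh (\<Theta> t) (clock \<omega> \<phi> t))"
  define Y where "Y = (\<lambda>t. \<Theta> t + \<alpha> *\<^sub>R fht t)"
  define B where "B = (\<lambda>t. integral {0..1} (\<lambda>r. Abar_mat fbar (Y t - (r * \<alpha>) *\<^sub>R fht t)))"
  have P1: "\<forall>t\<ge>0. (Y has_vector_derivative \<alpha> *\<^sub>R (fbar (Y t) - \<alpha> *\<^sub>R (B t *v fht t + Ups t))) (at t within {0..})"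
  proof (intro allI impI)
    fix t :: real assume t: "t \<ge> 0"
    have D: "(Y has_vector_derivative \<alpha> *\<^sub>R f (\<Theta> t) (probe G0 (clock \<omega> \<phi> t)) + \<alpha> *\<^sub>R (- (\<alpha> *\<^sub>R Ups t) - (f (\<Theta> t) (probe G0 (clock \<omega> \<phi> t)) - fbar (\<Theta> t)))) (at t within {0..})"
      unfolding Y_def fht_def Ups_def fbar_def
      by (rule has_vector_derivative_add[OF QSA'[OF t] vd_cmul[OF Dfh[OF t]]])
    have "fbar (Y t - \<alpha> *\<^sub>R fht t) = fbar (Y t) - integral {0..1} (\<lambda>r. Abar_mat fbar (Y t - r *\<^sub>R (\<alpha> *\<^sub>R fht t))) *v (\<alpha> *\<^sub>R fht t)"
      using fbar_taylor[OF fbar_C1[folded fbar_def]] .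
    moreover have e1: "Y t - \<alpha> *\<^sub>R fht t = \<Theta> t" unfolding Y_def by simp
    moreover have e2: "integral {0..1} (\<lambda>r. Abar_mat fbar (Y t - r *\<^sub>R (\<alpha> *\<^sub>R fht t))) = B t"
      unfolding B_def by (simp only: scaleR_scaleR)
    moreover have e3: "B t *v (\<alpha> *\<^sub>R fht t) = \<alpha> *\<^sub>R (B t *v fht t)" by (rule matrix_vector_mult_scaleR)
    ultimately have "fbar (\<Theta> t) = fbar (Y t) - \<alpha> *\<^sub>R (B t *v fht t)"
      by (simp only:)
    then have key: "\<alpha> *\<^sub>R (B t *v fht t) = fbar (Y t) - fbar (\<Theta> t)" by (simp add: algebra_simps)
    show "(Y has_vector_derivative \<alpha> *\<^sub>R (fbar (Y t) - \<alpha> *\<^sub>R (B t *v fht t + Ups t))) (at t within {0..})"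
      using D unfolding alg1[OF key] .
  qed
  define Upsbar where "Upsbar = avg \<mu> (Upsilon f G0 fh)"
  define W0 where "W0 = (\<lambda>t. - Df f G0 Uph (\<Theta> t) (clock \<omega> \<phi> t))"
  define W1 where "W1 = (\<lambda>t. - Df f G0 fhh (\<Theta> t) (clock \<omega> \<phi> t) + Uph (\<Theta> t) (clock \<omega> \<phi> t))"
  define W2 where "W2 = (\<lambda>t. fhh (\<Theta> t) (clock \<omega> \<phi> t))"
  have P2: "\<forall>W1' W2' W2''.
          (\<forall>t\<ge>0. (W1 has_vector_derivative W1' t) (at t within {0..}) \<and>
                  (W2 has_vector_derivative W2' t) (at t within {0..}) \<and>
                  (W2' has_vector_derivative W2'' t) (at t within {0..})) \<longrightarrow>
          (\<forall>t\<ge>0. (\<Theta> has_vector_derivative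
              \<alpha> *\<^sub>R (fbar (\<Theta> t) - \<alpha> *\<^sub>R Upsbar (\<Theta> t)
                      + (\<alpha>\<^sup>2 *\<^sub>R W0 t + \<alpha> *\<^sub>R W1' t + W2'' t))) (at t within {0..}))"
  proof (intro allI impI)
    fix W1' W2' W2'' :: "real \<Rightarrow> real^'d" and t :: real
    assume H: "\<forall>t\<ge>0. (W1 has_vector_derivative W1' t) (at t within {0..}) \<and>
                  (W2 has_vector_derivative W2' t) (at t within {0..}) \<and>
                  (W2' has_vector_derivative W2'' t) (at t within {0..})"
      and t: "t \<ge> 0"
    have H1: "(W1 has_vector_derivative W1' t) (at t within {0..})" using H t by blast
    have H3: "(W2' has_vector_derivative W2'' t) (at t within {0..})" using H t by blast
    have H2: "\<And>s. s \<ge> 0 \<Longrightarrow> (W2 has_vector_derivative W2' s) (at s within {0..})" using H by blast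
    have DU: "((\<lambda>s. Uph (\<Theta> s) (clock \<omega> \<phi> s)) has_vector_derivative
        \<alpha> *\<^sub>R Df f G0 Uph (\<Theta> t) (clock \<omega> \<phi> t) - (Ups t - Upsbar (\<Theta> t))) (at t within {0..})"
    proof -
      have "dtheta Uph (\<Theta> t) (clock \<omega> \<phi> t) (\<alpha> *\<^sub>R f (\<Theta> t) (probe G0 (clock \<omega> \<phi> t))) = \<alpha> *\<^sub>R Df f G0 Uph (\<Theta> t) (clock \<omega> \<phi> t)"
        unfolding dtheta_scale[OF Uph_C1 clock_in_Omega[OF t]] Df_def by simp
      with total_deriv[OF Uph_C1 Uph_sol cU QSA'[OF t] t] show ?thesis unfolding Ups_def Upsbar_def by simp
    qed
    have DW2: "(W2 has_vector_derivative \<alpha> *\<^sub>R Df f G0 fhh (\<Theta> s) (clock \<omega> \<phi> s) - fht s) (at s within {0..})"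
      if s: "s \<ge> 0" for s
    proof -
      have "dtheta fhh (\<Theta> s) (clock \<omega> \<phi> s) (\<alpha> *\<^sub>R f (\<Theta> s) (probe G0 (clock \<omega> \<phi> s))) = \<alpha> *\<^sub>R Df f G0 fhh (\<Theta> s) (clock \<omega> \<phi> s)"
        unfolding dtheta_scale[OF fhh_C1 clock_in_Omega[OF s]] Df_def by simp
      moreover have "avg \<mu> fh (\<Theta> s) = 0" using fh_sol unfolding poisson_solution_def avg_def by blast
      moreover note total_deriv[OF fhh_C1 fhh_sol cfh QSA'[OF s] s]
      ultimately show ?thesis unfolding W2_def fht_def by simp
    qed
    have W2'eq: "W2' s = \<alpha> *\<^sub>R Df f G0 fhh (\<Theta> s) (clock \<omega> \<phi> s) - fht s" if s: "s \<ge> 0" for s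
      by (rule vector_derivative_unique_within[OF nonbot_Ici[OF s] H2[OF s] DW2[OF s]])
    have KD: "((\<lambda>s. W2' s + \<alpha> *\<^sub>R W1 s) has_vector_derivative W2'' t + \<alpha> *\<^sub>R W1' t) (at t within {0..})"
      by (rule has_vector_derivative_add[OF H3 vd_cmul[OF H1]])
    have Dfh': "(fht has_vector_derivative - (\<alpha> *\<^sub>R Ups t) - (f (\<Theta> t) (probe G0 (clock \<omega> \<phi> t)) - fbar (\<Theta> t))) (at t within {0..})"
      using Dfh[OF t] unfolding fht_def Ups_def fbar_def by simp
    have KD2: "((\<lambda>s. \<alpha> *\<^sub>R Uph (\<Theta> s) (clock \<omega> \<phi> s) - fht s) has_vector_derivative
        \<alpha> *\<^sub>R (\<alpha> *\<^sub>R Df f G0 Uph (\<Theta> t) (clock \<omega> \<phi> t) - (Ups t - Upsbar (\<Theta> t)))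
        - (- (\<alpha> *\<^sub>R Ups t) - (f (\<Theta> t) (probe G0 (clock \<omega> \<phi> t)) - fbar (\<Theta> t)))) (at t within {0..})"
      by (rule has_vector_derivative_diff[OF vd_cmul[OF DU] Dfh'])
    have KD3: "((\<lambda>s. W2' s + \<alpha> *\<^sub>R W1 s) has_vector_derivative
        \<alpha> *\<^sub>R (\<alpha> *\<^sub>R Df f G0 Uph (\<Theta> t) (clock \<omega> \<phi> t) - (Ups t - Upsbar (\<Theta> t)))
        - (- (\<alpha> *\<^sub>R Ups t) - (f (\<Theta> t) (probe G0 (clock \<omega> \<phi> t)) - fbar (\<Theta> t)))) (at t within {0..})"
    proof (rule has_vector_derivative_transform[OF _ _ KD2])
      show "t \<in> {0..}" using t by simp
      fix x :: real assume x: "x \<in> {0..}"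
      show "W2' x + \<alpha> *\<^sub>R W1 x = \<alpha> *\<^sub>R Uph (\<Theta> x) (clock \<omega> \<phi> x) - fht x"
        using W2'eq[of x] x unfolding W1_def by (simp add: algebra_simps)
    qed
    have E: "W2'' t + \<alpha> *\<^sub>R W1' t = \<alpha> *\<^sub>R (\<alpha> *\<^sub>R Df f G0 Uph (\<Theta> t) (clock \<omega> \<phi> t) - (Ups t - Upsbar (\<Theta> t)))
        - (- (\<alpha> *\<^sub>R Ups t) - (f (\<Theta> t) (probe G0 (clock \<omega> \<phi> t)) - fbar (\<Theta> t)))"
      by (rule vector_derivative_unique_within[OF nonbot_Ici[OF t] KD KD3])
    have "\<alpha> *\<^sub>R (fbar (\<Theta> t) - \<alpha> *\<^sub>R Upsbar (\<Theta> t)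
                      + (\<alpha>\<^sup>2 *\<^sub>R W0 t + \<alpha> *\<^sub>R W1' t + W2'' t)) = \<alpha> *\<^sub>R f (\<Theta> t) (probe G0 (clock \<omega> \<phi> t))"
      unfolding W0_def by (rule alg2[OF E])
    then show "(\<Theta> has_vector_derivative
              \<alpha> *\<^sub>R (fbar (\<Theta> t) - \<alpha> *\<^sub>R Upsbar (\<Theta> t)
                      + (\<alpha>\<^sup>2 *\<^sub>R W0 t + \<alpha> *\<^sub>R W1' t + W2'' t))) (at t within {0..})"
      using QSA'[OF t] by (simp only:)
  qed
  show ?thesis
    using P1 P2 unfolding Let_def fbar_def fht_def Ups_def Y_def B_def Upsbar_def W0_def W1_def W2_def
    by blast
qed

end
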